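(* Let $(h_n)_{n\ge1}$ be the Hermite functions, i.e. the $L^2(\mathbb{R})$-normalized eigenfunctions of $T=-\frac{d^2}{dx^2}+x^2$ with $Th_n=(2n-1)h_n$, $\|h_n\|_{L^2(\mathbb{R})}=1$. Let $\delta_1>0$. Then there is a constant $C_{\delta_1}$ depending only on $\delta_1$ such that for every $n\ge1$, $$\left(\int_{\mathbb{R}}\frac{h_n^2(x)}{(1+\ln(1+x^2))^{2\delta_1}}\,dx\right)^{1/2}\le\frac{C_{\delta_1}}{(1+\ln n)^{\delta_1}}.$$ *)

theory Defs
  imports "HOL-Analysis.Analysis"
begin

fun hermite_poly :: "nat \<Rightarrow> real \<Rightarrow> real" where
  "hermite_poly 0 x = 1"
| "hermite_poly (Suc 0) x = 2 * x"
| "hermite_poly (Suc (Suc k)) x =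
     2 * x * hermite_poly (Suc k) x - 2 * real (Suc k) * hermite_poly k x"

text \<open>Hermite functions indexed from 1 as in the paper:
  h_n(x) = H_{n-1}(x) exp(-x^2/2) / sqrt(2^(n-1) (n-1)! sqrt pi),
  the L^2-normalized eigenfunction of -d^2/dx^2 + x^2 with eigenvalue 2n-1.\<close>
definition hermite_fun :: "nat \<Rightarrow> real \<Rightarrow> real" where
  "hermite_fun n x =
     hermite_poly (n - 1) x * exp (- (x ^ 2) / 2)
       / sqrt (2 ^ (n - 1) * fact (n - 1) * sqrt pi)"

end

theory Submission
  imports Defs "HOL-Probability.Distributions" "HOL-Real_Asymp.Real_Asymp"
begin
lemma H_rec: "hermite_poly (Suc k) x = 2*x*hermite_poly k x - 2*real k*hermite_poly (k-1) x"
  by (cases k) auto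

lemma H_deriv: "(hermite_poly k has_real_derivative (2 * real k * hermite_poly (k - 1) x)) (at x)"
proof -
  have "\<forall>x. (hermite_poly k has_real_derivative (2 * real k * hermite_poly (k - 1) x)) (at x) \<and>
     (hermite_poly (Suc k) has_real_derivative (2 * real (Suc k) * hermite_poly k x)) (at x)"
  proof (induction k)
    case 0
    have e: "hermite_poly (Suc 0) = (\<lambda>x. 2 * x)" by (rule ext) simp
    have e0: "hermite_poly 0 = (\<lambda>x. 1)" by (rule ext) simp
    show ?case unfolding e e0 by (auto intro!: derivative_eq_intros)
  next
    case (Suc k)
    show ?case
    proof
      fix x
      have e: "hermite_poly (Suc (Suc k)) = (\<lambda>x. 2 * x * hermite_poly (Suc k) x - 2 * real (Suc k) * hermite_poly k x)"
        by (rule ext) simp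
      have d1: "(hermite_poly (Suc k) has_real_derivative (2 * real (Suc k) * hermite_poly k x)) (at x)"
        using Suc.IH by blast
      have d0: "(hermite_poly k has_real_derivative (2 * real k * hermite_poly (k - 1) x)) (at x)"
        using Suc.IH by blast
      have "((\<lambda>x. 2 * x * hermite_poly (Suc k) x - 2 * real (Suc k) * hermite_poly k x) has_real_derivative
          (2 * hermite_poly (Suc k) x + 2 * x * (2 * real (Suc k) * hermite_poly k x) - 2 * real (Suc k) * (2 * real k * hermite_poly (k - 1) x))) (at x)"
        by (auto intro!: derivative_eq_intros d0 d1)
      moreover have "2 * hermite_poly (Suc k) x + 2 * x * (2 * real (Suc k) * hermite_poly k x) - 2 * real (Suc k) * (2 * real k * hermite_poly (k - 1) x)
          = 2 * real (Suc (Suc k)) * hermite_poly (Suc k) x"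
        by (simp only: H_rec[of k x]) (simp add: algebra_simps)
      ultimately show "(hermite_poly (Suc k) has_real_derivative (2 * real (Suc k) * hermite_poly (Suc k - 1) x)) (at x) \<and>
         (hermite_poly (Suc (Suc k)) has_real_derivative (2 * real (Suc (Suc k)) * hermite_poly (Suc k) x)) (at x)"
        using d1 e by simp
    qed
  qed
  then show ?thesis by blast
qed

lemma H_deriv_chain [derivative_intros]:
  "(g has_real_derivative g') (at x within S) \<Longrightarrow>
   ((\<lambda>x. hermite_poly k (g x)) has_real_derivative (2 * real k * hermite_poly (k - 1) (g x) * g')) (at x within S)"
  using DERIV_chain2[OF H_deriv] by blast

lemma H_cont: "continuous_on UNIV (hermite_poly k)"
  using H_deriv DERIV_isCont continuous_at_imp_continuous_on by blast

lemma H_bound: "\<exists>c. \<forall>x. \<bar>hermite_poly k x\<bar> \<le> c * (1 + \<bar>x\<bar>) ^ k"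
proof -
  have "\<exists>c d. \<forall>x. \<bar>hermite_poly k x\<bar> \<le> c * (1 + \<bar>x\<bar>) ^ k \<and> \<bar>hermite_poly (Suc k) x\<bar> \<le> d * (1 + \<bar>x\<bar>) ^ Suc k"
  proof (induction k)
    case 0
    show ?case by (rule exI[of _ 1], rule exI[of _ 2]) auto
  next
    case (Suc k)
    then obtain c d where cd: "\<And>x. \<bar>hermite_poly k x\<bar> \<le> c * (1 + \<bar>x\<bar>) ^ k" "\<And>x. \<bar>hermite_poly (Suc k) x\<bar> \<le> d * (1 + \<bar>x\<bar>) ^ Suc k"
      by blast
    have c0: "c \<ge> 0" using cd(1)[of 0] by auto
    have d0: "d \<ge> 0" using cd(2)[of 0] by auto
    show ?case
    proof (rule exI[of _ d], rule exI[of _ "2 * d + 2 * real (Suc k) * c"], intro allI conjI)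
      fix x
      show "\<bar>hermite_poly (Suc k) x\<bar> \<le> d * (1 + \<bar>x\<bar>) ^ Suc k" by (rule cd(2))
      let ?y = "1 + \<bar>x\<bar>"
      have y1: "?y \<ge> 1" by simp
      have "\<bar>hermite_poly (Suc (Suc k)) x\<bar> = \<bar>2 * x * hermite_poly (Suc k) x - 2 * real (Suc k) * hermite_poly k x\<bar>"
        by simp
      also have "\<dots> \<le> \<bar>2 * x * hermite_poly (Suc k) x\<bar> + \<bar>2 * real (Suc k) * hermite_poly k x\<bar>"
        by (rule abs_triangle_ineq4)
      also have "\<dots> = 2 * \<bar>x\<bar> * \<bar>hermite_poly (Suc k) x\<bar> + 2 * real (Suc k) * \<bar>hermite_poly k x\<bar>"
        by (simp add: abs_mult)
      also have "\<dots> \<le> 2 * ?y * (d * ?y ^ Suc k) + 2 * real (Suc k) * (c * ?y ^ k)"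
        by (intro add_mono mult_mono cd) (auto simp: d0)
      also have "\<dots> \<le> 2 * d * ?y ^ Suc (Suc k) + 2 * real (Suc k) * c * ?y ^ Suc (Suc k)"
      proof -
        have "?y ^ k \<le> ?y ^ Suc (Suc k)" using y1 by (intro power_increasing) auto
        then have "2 * real (Suc k) * (c * ?y ^ k) \<le> 2 * real (Suc k) * c * ?y ^ Suc (Suc k)"
          using c0 by (simp add: mult_left_mono)
        then show ?thesis by (simp add: algebra_simps)
      qed
      finally show "\<bar>hermite_poly (Suc (Suc k)) x\<bar> \<le> (2 * d + 2 * real (Suc k) * c) * (1 + \<bar>x\<bar>) ^ Suc (Suc k)"
        by (simp add: algebra_simps)
    qed
  qed
  then show ?thesis by blast
qed

lemma nd_half: "normal_density 0 (sqrt (1/2)) x = exp (- x\<^sup>2) / sqrt pi"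
  unfolding normal_density_def by (simp add: power2_eq_square)

lemma gauss_integral: "has_bochner_integral lborel (\<lambda>x. exp (- x\<^sup>2)) (sqrt pi)"
proof -
  have "has_bochner_integral lborel (\<lambda>x. normal_density 0 (sqrt (1/2)) x * (x - 0) ^ (2 * 0))
     (fact (2 * 0) / ((2 / (sqrt (1/2))\<^sup>2)^0 * fact 0))"
    by (rule normal_moment_even) simp
  then have "has_bochner_integral lborel (\<lambda>x. exp (- x\<^sup>2) / sqrt pi) 1"
    by (simp add: nd_half)
  from has_bochner_integral_mult_right[OF this, of "sqrt pi"] show ?thesis
    by simp
qed

lemma integrable_gauss_abs_pow: "integrable lborel (\<lambda>x::real. exp (- x\<^sup>2) * \<bar>x\<bar> ^ m)"
proof -
  have "integrable lborel (\<lambda>x. normal_density 0 (sqrt (1/2)) x * \<bar>x - 0\<bar> ^ m)"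
    by (rule integrable_normal_moment_abs) simp
  then have "integrable lborel (\<lambda>x. sqrt pi * (normal_density 0 (sqrt (1/2)) x * \<bar>x - 0\<bar> ^ m))"
    by (rule integrable_mult_right)
  then show ?thesis by (simp add: nd_half)
qed

lemma one_plus_pow_le: "(0::real) \<le> t \<Longrightarrow> (1 + t) ^ m \<le> 2 ^ m * (1 + t ^ m)"
proof (cases "t \<le> 1")
  case True
  assume "0 \<le> t"
  have "(1 + t) ^ m \<le> 2 ^ m" using True \<open>0 \<le> t\<close> by (intro power_mono) auto
  also have "\<dots> \<le> 2 ^ m * (1 + t ^ m)" using \<open>0 \<le> t\<close> by simp
  finally show ?thesis .
next
  case False
  assume "0 \<le> t"
  have "(1 + t) ^ m \<le> (2 * t) ^ m" using False by (intro power_mono) auto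
  also have "\<dots> \<le> 2 ^ m * (1 + t ^ m)" using \<open>0 \<le> t\<close> by (simp add: power_mult_distrib)
  finally show ?thesis .
qed

lemma poly_gauss_integrable:
  fixes f :: "real \<Rightarrow> real"
  assumes "continuous_on UNIV f" "\<And>x. \<bar>f x\<bar> \<le> c * (1 + \<bar>x\<bar>) ^ m"
  shows "integrable lborel (\<lambda>x. f x * exp (- x\<^sup>2))"
proof (rule Bochner_Integration.integrable_bound)
  show "integrable lborel (\<lambda>x. c * 2 ^ m * (exp (- x\<^sup>2) + exp (- x\<^sup>2) * \<bar>x\<bar> ^ m))"
    using gauss_integral integrable_gauss_abs_pow
    by (intro integrable_mult_right Bochner_Integration.integrable_add) (auto simp: has_bochner_integral_iff)
  show "(\<lambda>x. f x * exp (- x\<^sup>2)) \<in> borel_measurable lborel"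
    using borel_measurable_continuous_onI[OF assms(1)] by measurable
  show "AE x in lborel. norm (f x * exp (- x\<^sup>2)) \<le> norm (c * 2 ^ m * (exp (- x\<^sup>2) + exp (- x\<^sup>2) * \<bar>x\<bar> ^ m))"
  proof (rule AE_I2)
    fix x
    have c0: "c \<ge> 0" using assms(2)[of 0] by auto
    have "\<bar>f x\<bar> \<le> c * (2 ^ m * (1 + \<bar>x\<bar> ^ m))"
      using assms(2)[of x] one_plus_pow_le[of "\<bar>x\<bar>" m] c0
      by (meson abs_ge_zero mult_left_mono order_trans)
    then have "\<bar>f x\<bar> * exp (- x\<^sup>2) \<le> c * (2 ^ m * (1 + \<bar>x\<bar> ^ m)) * exp (- x\<^sup>2)"
      by (simp add: mult_right_mono)
    then show "norm (f x * exp (- x\<^sup>2)) \<le> norm (c * 2 ^ m * (exp (- x\<^sup>2) + exp (- x\<^sup>2) * \<bar>x\<bar> ^ m))"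
      using c0 by (simp add: abs_mult algebra_simps)
  qed
qed

lemma gauss_pow_tendsto:
  "((\<lambda>x::real. (2 + (x\<^sup>2) ^ m) * exp (- x\<^sup>2)) \<longlongrightarrow> 0) at_top"
  "((\<lambda>x::real. (2 + (x\<^sup>2) ^ m) * exp (- x\<^sup>2)) \<longlongrightarrow> 0) at_bot"
proof -
  have lim: "((\<lambda>y::real. (2 + y ^ m) / exp y) \<longlongrightarrow> 0) at_top"
  proof -
    have "((\<lambda>y::real. 2 / exp y + y ^ m / exp y) \<longlongrightarrow> 0 + 0) at_top"
      by (intro tendsto_add tendsto_power_div_exp_0) real_asymp
    then show ?thesis by (simp add: add_divide_distrib)
  qed
  have eq: "(\<lambda>x::real. (2 + (x\<^sup>2) ^ m) * exp (- x\<^sup>2)) = (\<lambda>y. (2 + y ^ m) / exp y) \<circ> (\<lambda>x. x\<^sup>2)"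
    by (auto simp: exp_minus field_simps)
  have t: "filterlim (\<lambda>x::real. x\<^sup>2) at_top at_top" by real_asymp
  have b: "filterlim (\<lambda>x::real. x\<^sup>2) at_top at_bot" by real_asymp
  show "((\<lambda>x::real. (2 + (x\<^sup>2) ^ m) * exp (- x\<^sup>2)) \<longlongrightarrow> 0) at_top"
    unfolding eq using filterlim_compose[OF lim t] by (simp add: comp_def)
  show "((\<lambda>x::real. (2 + (x\<^sup>2) ^ m) * exp (- x\<^sup>2)) \<longlongrightarrow> 0) at_bot"
    unfolding eq using filterlim_compose[OF lim b] by (simp add: comp_def)
qed

lemma poly_gauss_tendsto:
  fixes f :: "real \<Rightarrow> real"
  assumes "\<And>x. \<bar>f x\<bar> \<le> c * (1 + \<bar>x\<bar>) ^ m"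
  shows "((\<lambda>x. f x * exp (- x\<^sup>2)) \<longlongrightarrow> 0) at_top" "((\<lambda>x. f x * exp (- x\<^sup>2)) \<longlongrightarrow> 0) at_bot"
proof -
  have c0: "c \<ge> 0" using assms[of 0] by auto
  have bnd: "norm (f x * exp (- x\<^sup>2)) \<le> norm ((2 + (x\<^sup>2) ^ m) * exp (- x\<^sup>2)) * (c * 2 ^ m)" for x
  proof -
    have xm: "\<bar>x\<bar> ^ m \<le> 1 + (x\<^sup>2) ^ m"
    proof (cases "\<bar>x\<bar> \<le> 1")
      case True then have "\<bar>x\<bar> ^ m \<le> 1" by (simp add: power_le_one)
      then show ?thesis by (simp add: add_increasing2)
    next
      case False
      then have "\<bar>x\<bar> * 1 \<le> \<bar>x\<bar> * \<bar>x\<bar>" by (intro mult_left_mono) auto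
      then have "\<bar>x\<bar> \<le> \<bar>x\<bar>^2" by (simp add: power2_eq_square)
      then have "\<bar>x\<bar> ^ m \<le> (\<bar>x\<bar>^2) ^ m" by (intro power_mono) auto
      then show ?thesis by simp
    qed
    have "\<bar>f x\<bar> \<le> c * (2 ^ m * (1 + \<bar>x\<bar> ^ m))"
      using assms[of x] one_plus_pow_le[of "\<bar>x\<bar>" m] c0
      by (meson abs_ge_zero mult_left_mono order_trans)
    also have "\<dots> \<le> c * (2 ^ m * (2 + (x\<^sup>2) ^ m))"
      using xm c0 by (intro mult_left_mono) auto
    finally have "\<bar>f x\<bar> * exp (- x\<^sup>2) \<le> c * (2 ^ m * (2 + (x\<^sup>2) ^ m)) * exp (- x\<^sup>2)"
      by (simp add: mult_right_mono)
    then show ?thesis by (simp add: abs_mult algebra_simps)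
  qed
  show "((\<lambda>x. f x * exp (- x\<^sup>2)) \<longlongrightarrow> 0) at_top"
    by (rule tendsto_0_le[OF gauss_pow_tendsto(1)[of m], where K="c * 2 ^ m"]) (rule always_eventually, rule allI, rule bnd)
  show "((\<lambda>x. f x * exp (- x\<^sup>2)) \<longlongrightarrow> 0) at_bot"
    by (rule tendsto_0_le[OF gauss_pow_tendsto(2)[of m], where K="c * 2 ^ m"]) (rule always_eventually, rule allI, rule bnd)
qed

lemma FTC_R:
  fixes F f :: "real \<Rightarrow> real"
  assumes "\<And>x. (F has_real_derivative f x) (at x)" "continuous_on UNIV f" "integrable lborel f"
    "(F \<longlongrightarrow> 0) at_top" "(F \<longlongrightarrow> 0) at_bot"
  shows "integral\<^sup>L lborel f = 0"
proof -
  have "(LBINT x=-\<infinity>..\<infinity>. f x) = 0 - 0"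
  proof (rule interval_integral_FTC_integrable)
    show "(F has_vector_derivative f x) (at x)" for x
      using assms(1) by (simp add: has_real_derivative_iff_has_vector_derivative)
    show "isCont f x" for x using assms(2) by (simp add: continuous_on_eq_continuous_at)
    show "set_integrable lborel (einterval (- \<infinity>) \<infinity>) f"
      using assms(3) by (simp add: set_integrable_def)
    show "((F \<circ> real_of_ereal) \<longlongrightarrow> 0) (at_right (- \<infinity>))"
      using assms(5) by (simp add: ereal_tendsto_simps)
    show "((F \<circ> real_of_ereal) \<longlongrightarrow> 0) (at_left \<infinity>)"
      using assms(4) by (simp add: ereal_tendsto_simps)
  qed simp
  then show ?thesis
    by (simp add: interval_lebesgue_integral_def set_lebesgue_integral_def)
qed

lemma FTC_half:
  fixes F f :: "real \<Rightarrow> real"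
  assumes "\<And>x. (F has_real_derivative f x) (at x)" "continuous_on UNIV f" "\<And>x. x > 0 \<Longrightarrow> f x \<ge> 0"
    "(F \<longlongrightarrow> 0) at_top"
  shows "integrable lborel (\<lambda>x. indicator {0<..} x * f x)"
        "integral\<^sup>L lborel (\<lambda>x. indicator {0<..} x * f x) = - F 0"
proof -
  have cF: "isCont F 0" using assms(1) DERIV_isCont by blast
  have A: "((F \<circ> real_of_ereal) \<longlongrightarrow> F 0) (at_right (ereal 0))"
    unfolding ereal_tendsto_simps using cF
    by (simp add: filterlim_at_split isCont_def)
  have B: "((F \<circ> real_of_ereal) \<longlongrightarrow> 0) (at_left \<infinity>)"
    using assms(4) by (simp add: ereal_tendsto_simps)
  note r = interval_integral_FTC_nonneg[of "ereal 0" \<infinity> F f "F 0" 0, OF _ assms(1) _ _ A B]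
  have ic: "isCont f x" for x using assms(2) by (simp add: continuous_on_eq_continuous_at)
  have nn: "AE x in lborel. ereal 0 < ereal x \<longrightarrow> ereal x < \<infinity> \<longrightarrow> 0 \<le> f x"
    using assms(3) by auto
  from r(1)[OF _ ic nn] show "integrable lborel (\<lambda>x. indicator {0<..} x * f x)"
    by (simp add: set_integrable_def)
  from r(2)[OF _ ic nn] show "integral\<^sup>L lborel (\<lambda>x. indicator {0<..} x * f x) = - F 0"
    by (simp add: interval_lebesgue_integral_def set_lebesgue_integral_def)
qed

lemma F_deriv: "((\<lambda>x. hermite_poly (Suc k) x * hermite_poly k x * exp (- x\<^sup>2)) has_real_derivative
   (2 * real (Suc k) * (hermite_poly k x)\<^sup>2 - (hermite_poly (Suc k) x)\<^sup>2) * exp (- x\<^sup>2)) (at x)"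
proof -
  have d: "((\<lambda>x. hermite_poly (Suc k) x * hermite_poly k x * exp (- x\<^sup>2)) has_real_derivative
    (2 * real (Suc k) * hermite_poly k x * hermite_poly k x * exp (- x\<^sup>2) +
     hermite_poly (Suc k) x * (2 * real k * hermite_poly (k - 1) x) * exp (- x\<^sup>2) -
     hermite_poly (Suc k) x * hermite_poly k x * (2 * x * exp (- x\<^sup>2)))) (at x)"
    by (auto intro!: derivative_eq_intros simp: algebra_simps)
  have r: "hermite_poly (Suc k) x = 2*x*hermite_poly k x - 2*real k*hermite_poly (k-1) x" by (rule H_rec)
  show ?thesis
    by (rule DERIV_cong[OF d]) (simp add: r power2_eq_square algebra_simps)
qed

definition pb :: "(real \<Rightarrow> real) \<Rightarrow> bool" where
  "pb f \<longleftrightarrow> continuous_on UNIV f \<and> (\<exists>c m. \<forall>x. \<bar>f x\<bar> \<le> c * (1 + \<bar>x\<bar>) ^ m)"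

lemma pb_H: "pb (hermite_poly k)"
  unfolding pb_def using H_cont H_bound by blast

lemma pb_id: "pb (\<lambda>x. x)"
  unfolding pb_def by (auto intro!: exI[of _ 1] exI[of _ "1::nat"] continuous_intros)

lemma pb_const: "pb (\<lambda>x. a)"
  unfolding pb_def by (auto intro!: exI[of _ "\<bar>a\<bar>"] exI[of _ "0::nat"] continuous_intros)

lemma pb_mult: assumes "pb f" "pb g" shows "pb (\<lambda>x. f x * g x)"
proof -
  obtain c m where c: "\<And>x. \<bar>f x\<bar> \<le> c * (1 + \<bar>x\<bar>) ^ m" using assms(1) unfolding pb_def by blast
  obtain d n where d: "\<And>x. \<bar>g x\<bar> \<le> d * (1 + \<bar>x\<bar>) ^ n" using assms(2) unfolding pb_def by blast
  have c0: "c \<ge> 0" using c[of 0] by auto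
  have "\<bar>f x * g x\<bar> \<le> (c * d) * (1 + \<bar>x\<bar>) ^ (m + n)" for x
  proof -
    have "\<bar>f x * g x\<bar> \<le> (c * (1 + \<bar>x\<bar>) ^ m) * (d * (1 + \<bar>x\<bar>) ^ n)"
      unfolding abs_mult using c0 by (intro mult_mono c d) auto
    then show ?thesis by (simp add: power_add algebra_simps)
  qed
  moreover have "continuous_on UNIV (\<lambda>x. f x * g x)"
    using assms unfolding pb_def by (auto intro!: continuous_intros)
  ultimately show ?thesis unfolding pb_def by blast
qed

lemma pb_add: assumes "pb f" "pb g" shows "pb (\<lambda>x. f x + g x)"
proof -
  obtain c m where c: "\<And>x. \<bar>f x\<bar> \<le> c * (1 + \<bar>x\<bar>) ^ m" using assms(1) unfolding pb_def by blast
  obtain d n where d: "\<And>x. \<bar>g x\<bar> \<le> d * (1 + \<bar>x\<bar>) ^ n" using assms(2) unfolding pb_def by blast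
  have c0: "c \<ge> 0" using c[of 0] by auto
  have d0: "d \<ge> 0" using d[of 0] by auto
  have "\<bar>f x + g x\<bar> \<le> (c + d) * (1 + \<bar>x\<bar>) ^ (m + n)" for x
  proof -
    have "(1 + \<bar>x\<bar>) ^ m \<le> (1 + \<bar>x\<bar>) ^ (m + n)" "(1 + \<bar>x\<bar>) ^ n \<le> (1 + \<bar>x\<bar>) ^ (m + n)"
      by (intro power_increasing; simp)+
    then have "c * (1 + \<bar>x\<bar>) ^ m \<le> c * (1 + \<bar>x\<bar>) ^ (m + n)" "d * (1 + \<bar>x\<bar>) ^ n \<le> d * (1 + \<bar>x\<bar>) ^ (m + n)"
      using c0 d0 by (auto intro: mult_left_mono)
    moreover have "\<bar>f x + g x\<bar> \<le> \<bar>f x\<bar> + \<bar>g x\<bar>" by (rule abs_triangle_ineq)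
    ultimately show ?thesis using c[of x] d[of x] by (simp add: algebra_simps)
  qed
  moreover have "continuous_on UNIV (\<lambda>x. f x + g x)"
    using assms unfolding pb_def by (auto intro!: continuous_intros)
  ultimately show ?thesis unfolding pb_def by blast
qed

lemma pb_diff: assumes "pb f" "pb g" shows "pb (\<lambda>x. f x - g x)"
proof -
  have "pb (\<lambda>x. f x + (-1) * g x)" using assms by (intro pb_add pb_mult pb_const)
  then show ?thesis by simp
qed

lemma pb_power: assumes "pb f" shows "pb (\<lambda>x. f x ^ n)"
  by (induction n) (auto intro: pb_mult pb_const assms)

lemma pb_integrable: "pb f \<Longrightarrow> integrable lborel (\<lambda>x. f x * exp (- x\<^sup>2))"
  unfolding pb_def using poly_gauss_integrable by blast

lemma pb_tendsto: "pb f \<Longrightarrow> ((\<lambda>x. f x * exp (- x\<^sup>2)) \<longlongrightarrow> 0) at_top"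
   "pb f \<Longrightarrow> ((\<lambda>x. f x * exp (- x\<^sup>2)) \<longlongrightarrow> 0) at_bot"
  unfolding pb_def using poly_gauss_tendsto by blast+

lemma pb_cont: "pb f \<Longrightarrow> continuous_on UNIV (\<lambda>x. f x * exp (- x\<^sup>2))"
  unfolding pb_def by (auto intro!: continuous_intros)

definition NH :: "nat \<Rightarrow> real" where
  "NH k = (LINT x|lborel. (hermite_poly k x)\<^sup>2 * exp (- x\<^sup>2))"

lemma NH_Suc: "NH (Suc k) = 2 * real (Suc k) * NH k"
proof -
  let ?p = "\<lambda>x. 2 * real (Suc k) * (hermite_poly k x)\<^sup>2 - (hermite_poly (Suc k) x)\<^sup>2"
  have pp: "pb ?p" by (intro pb_diff pb_mult pb_const pb_power pb_H)
  have pF: "pb (\<lambda>x. hermite_poly (Suc k) x * hermite_poly k x)" by (intro pb_mult pb_H)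
  have "integral\<^sup>L lborel (\<lambda>x. ?p x * exp (- x\<^sup>2)) = 0"
  proof (rule FTC_R)
    show "((\<lambda>x. hermite_poly (Suc k) x * hermite_poly k x * exp (- x\<^sup>2)) has_real_derivative ?p x * exp (- x\<^sup>2)) (at x)" for x
      by (rule F_deriv)
  qed (use pp pb_cont pb_integrable pb_tendsto[OF pF] in auto)
  moreover have i1: "integrable lborel (\<lambda>x. (hermite_poly k x)\<^sup>2 * exp (- x\<^sup>2))"
    by (intro pb_integrable pb_power pb_H)
  moreover have i2: "integrable lborel (\<lambda>x. (hermite_poly (Suc k) x)\<^sup>2 * exp (- x\<^sup>2))"
    by (intro pb_integrable pb_power pb_H)
  ultimately have "2 * real (Suc k) * NH k - NH (Suc k) = 0"
    unfolding NH_def by (simp add: left_diff_distrib mult.assoc)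
  then show ?thesis by simp
qed

lemma NH_val: "NH k = 2 ^ k * fact k * sqrt pi"
proof (induction k)
  case 0
  show ?case using gauss_integral unfolding NH_def by (simp add: has_bochner_integral_iff)
next
  case (Suc k)
  then show ?case by (simp add: NH_Suc algebra_simps)
qed

definition EE :: "nat \<Rightarrow> real \<Rightarrow> real" where
  "EE k x = ((2 * real k * hermite_poly (k - 1) x - x * hermite_poly k x)\<^sup>2
            + (2 * real k + 1 - x\<^sup>2) * (hermite_poly k x)\<^sup>2) * exp (- x\<^sup>2)"

lemma H_R: "real k * (hermite_poly k x - 2 * x * hermite_poly (k - 1) x + 2 * real (k - 1) * hermite_poly (k - 1 - 1) x) = 0"
  by (cases k) (auto simp: H_rec)

lemma EE_deriv: "(EE k has_real_derivative (- 2 * x * (hermite_poly k x)\<^sup>2 * exp (- x\<^sup>2))) (at x)"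
proof -
  define a where "a = hermite_poly k x"
  define b where "b = hermite_poly (k - 1) x"
  define c where "c = hermite_poly (k - 1 - 1) x"
  define e where "e = exp (- x\<^sup>2)"
  define q where "q = 2 * real k * b - x * a"
  have d: "(EE k has_real_derivative
     ((2 * q * (2 * real k * (2 * real (k - 1) * c) - a - x * (2 * real k * b))
      + (- 2 * x) * a\<^sup>2 + (2 * real k + 1 - x\<^sup>2) * (2 * a * (2 * real k * b))) * e
      + (q\<^sup>2 + (2 * real k + 1 - x\<^sup>2) * a\<^sup>2) * (- 2 * x * e))) (at x)"
    unfolding EE_def[abs_def] a_def b_def c_def e_def q_def
    by (auto intro!: derivative_eq_intros simp: algebra_simps power2_eq_square)
  have eq: "(2 * q * (2 * real k * (2 * real (k - 1) * c) - a - x * (2 * real k * b))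
      + (- 2 * x) * a\<^sup>2 + (2 * real k + 1 - x\<^sup>2) * (2 * a * (2 * real k * b))) * e
      + (q\<^sup>2 + (2 * real k + 1 - x\<^sup>2) * a\<^sup>2) * (- 2 * x * e)
     = - 2 * x * a\<^sup>2 * e + 4 * q * e * (real k * (a - 2 * x * b + 2 * real (k - 1) * c))"
    unfolding q_def by (simp add: algebra_simps power2_eq_square)
  have R: "real k * (a - 2 * x * b + 2 * real (k - 1) * c) = 0"
    unfolding a_def b_def c_def by (rule H_R)
  from d have "(EE k has_real_derivative (- 2 * x * a\<^sup>2 * e)) (at x)"
    by (simp only: eq R) simp
  then show ?thesis by (simp add: a_def e_def)
qed


lemma EE_le_0: "EE k x \<le> EE k 0"
proof (cases "x \<le> 0")
  case True
  show ?thesis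
  proof (rule DERIV_nonneg_imp_nondecreasing[OF True])
    fix t assume "x \<le> t" "t \<le> 0"
    then show "\<exists>y. DERIV (EE k) t :> y \<and> y \<ge> 0"
      by (intro exI[of _ "- 2 * t * (hermite_poly k t)\<^sup>2 * exp (- t\<^sup>2)"] conjI EE_deriv)
         (auto intro!: mult_nonpos_nonneg)
  qed
next
  case False
  show ?thesis
  proof (rule DERIV_nonpos_imp_nonincreasing[of 0 x])
    show "0 \<le> x" using False by simp
    fix t assume "0 \<le> t" "t \<le> x"
    then show "\<exists>y. DERIV (EE k) t :> y \<and> y \<le> 0"
      by (intro exI[of _ "- 2 * t * (hermite_poly k t)\<^sup>2 * exp (- t\<^sup>2)"] conjI EE_deriv)
         (auto simp: mult_nonneg_nonneg)
  qed
qed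

lemma pb_abs: "pb (\<lambda>x. \<bar>x\<bar>)"
  unfolding pb_def by (auto intro!: exI[of _ 1] exI[of _ "1::nat"] continuous_intros)

lemma pb_EE: "pb (\<lambda>x. (2 * real k * hermite_poly (k - 1) x - x * hermite_poly k x)\<^sup>2
            + (2 * real k + 1 - x\<^sup>2) * (hermite_poly k x)\<^sup>2)"
  by (intro pb_add pb_diff pb_mult pb_power pb_const pb_H pb_id)

lemma EE_0_le: "EE k 0 \<le> (LINT x|lborel. (2 * \<bar>x\<bar> * (hermite_poly k x)\<^sup>2) * exp (- x\<^sup>2))"
proof -
  let ?f = "\<lambda>x. (2 * x * (hermite_poly k x)\<^sup>2) * exp (- x\<^sup>2)"
  have pf: "pb (\<lambda>x. 2 * x * (hermite_poly k x)\<^sup>2)" by (intro pb_mult pb_power pb_const pb_H pb_id)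
  have lim: "((\<lambda>x. - EE k x) \<longlongrightarrow> 0) at_top"
    using tendsto_minus[OF pb_tendsto(1)[OF pb_EE[of k]]] unfolding EE_def by simp
  have der: "((\<lambda>x. - EE k x) has_real_derivative ?f x) (at x)" for x
    using DERIV_minus[OF EE_deriv[of k x]] by simp
  note r = FTC_half[of "\<lambda>x. - EE k x" ?f, OF der pb_cont[OF pf] _ lim]
  have "EE k 0 = (LINT x|lborel. indicator {0<..} x * ?f x)"
    using r(2) by simp
  also have "\<dots> \<le> (LINT x|lborel. (2 * \<bar>x\<bar> * (hermite_poly k x)\<^sup>2) * exp (- x\<^sup>2))"
  proof (rule integral_mono)
    show "integrable lborel (\<lambda>x. indicator {0<..} x * ?f x)" using r(1) by simp
    show "integrable lborel (\<lambda>x. (2 * \<bar>x\<bar> * (hermite_poly k x)\<^sup>2) * exp (- x\<^sup>2))"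
      by (intro pb_integrable pb_mult pb_power pb_const pb_H pb_abs)
    fix x
    show "indicator {0<..} x * ?f x \<le> (2 * \<bar>x\<bar> * (hermite_poly k x)\<^sup>2) * exp (- x\<^sup>2)"
      by (cases "x > 0") (auto simp: indicator_def intro!: mult_nonpos_nonneg)
  qed
  finally show ?thesis .
qed

lemma sq2: "(a + b)\<^sup>2 \<le> 2 * (a\<^sup>2 + b\<^sup>2 :: real)"
proof -
  have "(a+b)\<^sup>2 + (a-b)\<^sup>2 = 2*(a\<^sup>2+b\<^sup>2)" by (simp add: power2_eq_square algebra_simps)
  moreover have "(a-b)\<^sup>2 \<ge> 0" by simp
  ultimately show ?thesis by linarith
qed

lemma x2_bound: "(LINT x|lborel. (x\<^sup>2 * (hermite_poly k x)\<^sup>2) * exp (- x\<^sup>2)) \<le> (2 * real k + 1) * NH k"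
proof -
  have pt: "x\<^sup>2 * (hermite_poly k x)\<^sup>2 \<le> ((hermite_poly (Suc k) x)\<^sup>2 + 4 * (real k)\<^sup>2 * (hermite_poly (k - 1) x)\<^sup>2) / 2" for x
  proof -
    have "2 * x * hermite_poly k x = hermite_poly (Suc k) x + 2 * real k * hermite_poly (k - 1) x"
      by (simp add: H_rec)
    then have "4 * (x\<^sup>2 * (hermite_poly k x)\<^sup>2) = (hermite_poly (Suc k) x + 2 * real k * hermite_poly (k - 1) x)\<^sup>2"
    proof -
      assume h: "2 * x * hermite_poly k x = hermite_poly (Suc k) x + 2 * real k * hermite_poly (k - 1) x"
      have "4 * (x\<^sup>2 * (hermite_poly k x)\<^sup>2) = (2 * x * hermite_poly k x)\<^sup>2" by (simp add: power2_eq_square)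
      then show ?thesis using h by simp
    qed
    moreover have "(hermite_poly (Suc k) x + 2 * real k * hermite_poly (k - 1) x)\<^sup>2
       \<le> 2 * ((hermite_poly (Suc k) x)\<^sup>2 + 4 * (real k)\<^sup>2 * (hermite_poly (k - 1) x)\<^sup>2)"
      using sq2[of "hermite_poly (Suc k) x" "2 * real k * hermite_poly (k - 1) x"]
      by (simp add: power_mult_distrib)
    ultimately show ?thesis by simp
  qed
  have i1: "integrable lborel (\<lambda>x. (hermite_poly (Suc k) x)\<^sup>2 * exp (- x\<^sup>2))"
    by (intro pb_integrable pb_power pb_H)
  have i2: "integrable lborel (\<lambda>x. (hermite_poly (k - 1) x)\<^sup>2 * exp (- x\<^sup>2))"
    by (intro pb_integrable pb_power pb_H)
  have "(LINT x|lborel. (x\<^sup>2 * (hermite_poly k x)\<^sup>2) * exp (- x\<^sup>2))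
     \<le> (LINT x|lborel. (1/2) * ((hermite_poly (Suc k) x)\<^sup>2 * exp (- x\<^sup>2)) + (2 * (real k)\<^sup>2) * ((hermite_poly (k - 1) x)\<^sup>2 * exp (- x\<^sup>2)))"
  proof (rule integral_mono)
    show "integrable lborel (\<lambda>x. (x\<^sup>2 * (hermite_poly k x)\<^sup>2) * exp (- x\<^sup>2))"
      by (intro pb_integrable pb_mult pb_power pb_H pb_id)
    show "integrable lborel (\<lambda>x. (1/2) * ((hermite_poly (Suc k) x)\<^sup>2 * exp (- x\<^sup>2)) + (2 * (real k)\<^sup>2) * ((hermite_poly (k - 1) x)\<^sup>2 * exp (- x\<^sup>2)))"
      using i1 i2 by auto
    fix x
    have "(x\<^sup>2 * (hermite_poly k x)\<^sup>2) * exp (- x\<^sup>2) \<le> (((hermite_poly (Suc k) x)\<^sup>2 + 4 * (real k)\<^sup>2 * (hermite_poly (k - 1) x)\<^sup>2) / 2) * exp (- x\<^sup>2)"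
      using pt[of x] by (simp add: mult_right_mono)
    then show "(x\<^sup>2 * (hermite_poly k x)\<^sup>2) * exp (- x\<^sup>2) \<le> (1/2) * ((hermite_poly (Suc k) x)\<^sup>2 * exp (- x\<^sup>2)) + (2 * (real k)\<^sup>2) * ((hermite_poly (k - 1) x)\<^sup>2 * exp (- x\<^sup>2))"
      by (simp add: algebra_simps)
  qed
  also have "\<dots> = (1/2) * NH (Suc k) + 2 * (real k)\<^sup>2 * NH (k - 1)"
    using i1 i2 unfolding NH_def by simp
  also have "\<dots> = (2 * real k + 1) * NH k"
  proof (cases k)
    case 0 then show ?thesis by (simp add: NH_Suc)
  next
    case (Suc j) then show ?thesis by (simp add: NH_Suc power2_eq_square algebra_simps)
  qed
  finally show ?thesis .
qed

lemma NH_pos: "NH k > 0" by (simp add: NH_val)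

lemma hf_sq: "(hermite_fun n x)\<^sup>2 = (hermite_poly (n - 1) x)\<^sup>2 * exp (- x\<^sup>2) / NH (n - 1)"
proof -
  have e: "(exp (- (x\<^sup>2) / 2))\<^sup>2 = exp (- x\<^sup>2)"
    by (simp add: power2_eq_square exp_add[symmetric])
  have s: "(sqrt (2 ^ (n - 1) * fact (n - 1) * sqrt pi))\<^sup>2 = NH (n - 1)"
    by (simp add: NH_val)
  show ?thesis unfolding hermite_fun_def power_divide power_mult_distrib e s ..
qed

lemma hf_int: "(LINT x|lborel. (hermite_fun n x)\<^sup>2) = 1"
  "integrable lborel (\<lambda>x. (hermite_fun n x)\<^sup>2)"
proof -
  have i: "integrable lborel (\<lambda>x. (hermite_poly (n - 1) x)\<^sup>2 * exp (- x\<^sup>2))"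
    by (intro pb_integrable pb_power pb_H)
  show "integrable lborel (\<lambda>x. (hermite_fun n x)\<^sup>2)"
    unfolding hf_sq using i by simp
  show "(LINT x|lborel. (hermite_fun n x)\<^sup>2) = 1"
    unfolding hf_sq using NH_pos[of "n - 1"] by (simp add: NH_def[symmetric])
qed

lemma sup_bound:
  assumes "x\<^sup>2 \<le> (2 * real k + 1) / 2"
  shows "(hermite_poly k x)\<^sup>2 * exp (- x\<^sup>2) \<le> 4 * NH k / sqrt (2 * real k + 1)"
proof -
  define l where "l = 2 * real k + 1"
  define s where "s = sqrt l"
  have l1: "l \<ge> 1" unfolding l_def by simp
  have s0: "s > 0" unfolding s_def using l1 by simp
  have ss: "s * s = l" unfolding s_def using l1 by simp
  have N0: "NH k > 0" by (rule NH_pos)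
  have i1: "integrable lborel (\<lambda>x. (x\<^sup>2 * (hermite_poly k x)\<^sup>2) * exp (- x\<^sup>2))"
    by (intro pb_integrable pb_mult pb_power pb_H pb_id)
  have i0: "integrable lborel (\<lambda>x. (hermite_poly k x)\<^sup>2 * exp (- x\<^sup>2))"
    by (intro pb_integrable pb_power pb_H)
  have "EE k 0 \<le> (LINT x|lborel. (2 * \<bar>x\<bar> * (hermite_poly k x)\<^sup>2) * exp (- x\<^sup>2))"
    by (rule EE_0_le)
  also have "\<dots> \<le> (LINT x|lborel. (1 / s) * ((x\<^sup>2 * (hermite_poly k x)\<^sup>2) * exp (- x\<^sup>2)) + s * ((hermite_poly k x)\<^sup>2 * exp (- x\<^sup>2)))"
  proof (rule integral_mono)
    show "integrable lborel (\<lambda>x. (2 * \<bar>x\<bar> * (hermite_poly k x)\<^sup>2) * exp (- x\<^sup>2))"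
      by (intro pb_integrable pb_mult pb_power pb_const pb_H pb_abs)
    show "integrable lborel (\<lambda>x. (1 / s) * ((x\<^sup>2 * (hermite_poly k x)\<^sup>2) * exp (- x\<^sup>2)) + s * ((hermite_poly k x)\<^sup>2 * exp (- x\<^sup>2)))"
      using i0 i1 by auto
    fix x
    have "2 * \<bar>x\<bar> \<le> x\<^sup>2 / s + s"
    proof -
      have "0 \<le> (\<bar>x\<bar> - s)\<^sup>2" by simp
      then have "2 * \<bar>x\<bar> * s \<le> x\<^sup>2 + s * s" by (simp add: power2_eq_square algebra_simps)
      then show ?thesis using s0 by (simp add: field_simps)
    qed
    then have "2 * \<bar>x\<bar> * ((hermite_poly k x)\<^sup>2 * exp (- x\<^sup>2)) \<le> (x\<^sup>2 / s + s) * ((hermite_poly k x)\<^sup>2 * exp (- x\<^sup>2))"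
      by (intro mult_right_mono) auto
    then show "(2 * \<bar>x\<bar> * (hermite_poly k x)\<^sup>2) * exp (- x\<^sup>2) \<le> (1 / s) * ((x\<^sup>2 * (hermite_poly k x)\<^sup>2) * exp (- x\<^sup>2)) + s * ((hermite_poly k x)\<^sup>2 * exp (- x\<^sup>2))"
      by (simp add: algebra_simps)
  qed
  also have "\<dots> = (1 / s) * (LINT x|lborel. (x\<^sup>2 * (hermite_poly k x)\<^sup>2) * exp (- x\<^sup>2)) + s * NH k"
    using i0 i1 unfolding NH_def by simp
  also have "\<dots> \<le> (1 / s) * (l * NH k) + s * NH k"
    using x2_bound[of k] s0 unfolding l_def by (intro add_mono mult_left_mono) auto
  also have "\<dots> = 2 * s * NH k"
    using s0 ss by (simp add: field_simps)
  finally have E0: "EE k 0 \<le> 2 * s * NH k" .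
  have "(l / 2) * ((hermite_poly k x)\<^sup>2 * exp (- x\<^sup>2)) \<le> (l - x\<^sup>2) * ((hermite_poly k x)\<^sup>2 * exp (- x\<^sup>2))"
    using assms unfolding l_def[symmetric] by (intro mult_right_mono) auto
  also have "\<dots> = (l - x\<^sup>2) * (hermite_poly k x)\<^sup>2 * exp (- x\<^sup>2)" by (simp add: mult.assoc)
  also have "\<dots> \<le> EE k x"
    unfolding EE_def l_def by (simp add: algebra_simps)
  also have "\<dots> \<le> EE k 0" by (rule EE_le_0)
  finally have "(l / 2) * ((hermite_poly k x)\<^sup>2 * exp (- x\<^sup>2)) \<le> 2 * s * NH k" using E0 by linarith
  then have "(hermite_poly k x)\<^sup>2 * exp (- x\<^sup>2) \<le> 4 * s * NH k / l"
    using l1 by (simp add: field_simps)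
  also have "4 * s * NH k / l = 4 * NH k / s" using ss[symmetric] s0 by (simp add: field_simps)
  finally show ?thesis unfolding s_def l_def .
qed

lemma hf_sup:
  assumes "n \<ge> 1" "x\<^sup>2 \<le> real n - 1/2"
  shows "(hermite_fun n x)\<^sup>2 \<le> 4 / sqrt (2 * real n - 1)"
proof -
  have k: "2 * real (n - 1) + 1 = 2 * real n - 1" using assms(1) by (simp add: of_nat_diff)
  have "(hermite_poly (n - 1) x)\<^sup>2 * exp (- x\<^sup>2) \<le> 4 * NH (n - 1) / sqrt (2 * real (n - 1) + 1)"
    by (rule sup_bound) (use assms k in simp)
  then show ?thesis unfolding hf_sq k using NH_pos[of "n - 1"] by (simp add: field_simps)
qed

lemma hf_meas[measurable]: "hermite_fun n \<in> borel_measurable borel"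
proof -
  have "continuous_on UNIV (hermite_fun n)"
    unfolding hermite_fun_def[abs_def] using H_cont by (auto intro!: continuous_intros)
  then show ?thesis by (rule borel_measurable_continuous_onI)
qed

lemma w_ge1: "(0::real) \<le> d \<Longrightarrow> 1 \<le> (1 + ln (1 + x\<^sup>2)) powr d"
  by (rule ge_one_powr_ge_zero) auto

lemma int_w:
  assumes "d > 0"
  shows "integrable lborel (\<lambda>x. (hermite_fun n x)\<^sup>2 / (1 + ln (1 + x\<^sup>2)) powr d)"
proof (rule Bochner_Integration.integrable_bound[OF hf_int(2)])
  show "(\<lambda>x. (hermite_fun n x)\<^sup>2 / (1 + ln (1 + x\<^sup>2)) powr d) \<in> borel_measurable lborel"
    by measurable
  show "AE x in lborel. norm ((hermite_fun n x)\<^sup>2 / (1 + ln (1 + x\<^sup>2)) powr d) \<le> norm ((hermite_fun n x)\<^sup>2)"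
  proof (rule AE_I2)
    fix x
    have "1 \<le> (1 + ln (1 + x\<^sup>2)) powr d" using assms by (intro w_ge1) auto
    then have "(hermite_fun n x)\<^sup>2 / (1 + ln (1 + x\<^sup>2)) powr d \<le> (hermite_fun n x)\<^sup>2 / 1"
      by (intro divide_left_mono) auto
    moreover have "0 \<le> (hermite_fun n x)\<^sup>2 / (1 + ln (1 + x\<^sup>2)) powr d" by simp
    ultimately show "norm ((hermite_fun n x)\<^sup>2 / (1 + ln (1 + x\<^sup>2)) powr d) \<le> norm ((hermite_fun n x)\<^sup>2)"
      by simp
  qed
qed

lemma log_poly:
  assumes "\<delta> > 0" "n \<ge> 1"
  shows "(1 + ln (real n)) powr (2 * \<delta>) \<le> (1 + 8 * \<delta>) powr (2 * \<delta>) * sqrt (sqrt (real n))"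
proof -
  define y where "y = real n powr (1 / (8 * \<delta>))"
  have n1: "real n \<ge> 1" using assms by simp
  have y1: "y \<ge> 1" unfolding y_def using n1 assms by (intro ge_one_powr_ge_zero) auto
  have "ln y = ln (real n) / (8 * \<delta>)" unfolding y_def using n1 by (simp add: ln_powr)
  moreover have "ln y \<le> y - 1" using y1 by (intro ln_le_minus_one) auto
  ultimately have "ln (real n) = 8 * \<delta> * ln y" "8 * \<delta> * ln y \<le> 8 * \<delta> * (y - 1)"
    using assms by (simp add: field_simps, intro mult_left_mono) auto
  then have "ln (real n) \<le> 8 * \<delta> * (y - 1)" by linarith
  then have L: "1 + ln (real n) \<le> (1 + 8 * \<delta>) * y" using y1 assms by (simp add: algebra_simps)
  have L0: "0 \<le> 1 + ln (real n)" using n1 by simp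
  have "(1 + ln (real n)) powr (2 * \<delta>) \<le> ((1 + 8 * \<delta>) * y) powr (2 * \<delta>)"
    using L L0 assms by (intro powr_mono2) auto
  also have "\<dots> = (1 + 8 * \<delta>) powr (2 * \<delta>) * y powr (2 * \<delta>)"
    using y1 assms by (subst powr_mult) auto
  also have "y powr (2 * \<delta>) = real n powr (1/4)"
    unfolding y_def using assms by (simp add: powr_powr)
  also have "real n powr (1/4) = sqrt (sqrt (real n))"
    using n1 by (simp add: powr_half_sqrt[symmetric] powr_powr)
  finally show ?thesis .
qed

lemma main_ge2:
  assumes d: "\<delta> > 0" and n: "n \<ge> 2"
  shows "(LINT x|lborel. (hermite_fun n x)\<^sup>2 / (1 + ln (1 + x\<^sup>2)) powr (2 * \<delta>))
     \<le> (16 * (1 + 8 * \<delta>) powr (2 * \<delta>) + 2 powr (2 * \<delta>)) / (1 + ln (real n)) powr (2 * \<delta>)"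
proof -
  define s where "s = real n - 1/2"
  define R where "R = sqrt (sqrt s)"
  define c where "c = 4 / sqrt (2 * real n - 1)"
  define W where "W = (1 + ln (1 + sqrt s)) powr (2 * \<delta>)"
  define L where "L = 1 + ln (real n)"
  define K where "K = (1 + 8 * \<delta>) powr (2 * \<delta>)"
  have n1: "real n \<ge> 2" using n by simp
  have s1: "s \<ge> 1" unfolding s_def using n1 by simp
  have R0: "R > 0" unfolding R_def using s1 by simp
  have RR: "R * R = sqrt s" unfolding R_def using s1 by simp
  have sqs: "sqrt s \<le> s"
  proof -
    have "sqrt s * 1 \<le> sqrt s * sqrt s" using s1 by (intro mult_left_mono) auto
    then show ?thesis using s1 by simp
  qed
  have W1: "W \<ge> 1" unfolding W_def using d s1 by (intro ge_one_powr_ge_zero) auto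
  have L1: "L \<ge> 1" unfolding L_def using n1 by simp
  have pt: "(hermite_fun n x)\<^sup>2 / (1 + ln (1 + x\<^sup>2)) powr (2 * \<delta>)
      \<le> c * indicator {-R..R} x + (1 / W) * (hermite_fun n x)\<^sup>2" for x
  proof (cases "\<bar>x\<bar> \<le> R")
    case True
    have "\<bar>x\<bar>\<^sup>2 \<le> R\<^sup>2" using True by (intro power_mono) auto
    then have "x\<^sup>2 \<le> R\<^sup>2" by simp
    then have "x\<^sup>2 \<le> real n - 1/2" using RR sqs unfolding s_def by (simp add: power2_eq_square)
    then have hc: "(hermite_fun n x)\<^sup>2 \<le> c" unfolding c_def using n by (intro hf_sup) auto
    have "1 \<le> (1 + ln (1 + x\<^sup>2)) powr (2 * \<delta>)" using d by (intro w_ge1) auto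
    then have "(hermite_fun n x)\<^sup>2 / (1 + ln (1 + x\<^sup>2)) powr (2 * \<delta>) \<le> (hermite_fun n x)\<^sup>2 / 1"
      by (intro divide_left_mono) auto
    moreover have "0 \<le> (1 / W) * (hermite_fun n x)\<^sup>2" using W1 by simp
    ultimately show ?thesis using True hc by (simp add: indicator_def abs_le_iff)
  next
    case False
    then have "R\<^sup>2 < \<bar>x\<bar>\<^sup>2" using R0 by (intro power_strict_mono) auto
    then have "R\<^sup>2 < x\<^sup>2" by simp
    then have "sqrt s \<le> x\<^sup>2" using RR by (simp add: power2_eq_square)
    then have "ln (1 + sqrt s) \<le> ln (1 + x\<^sup>2)" proof -
      have "0 < 1 + sqrt s" using s1 by (smt (verit) real_sqrt_ge_zero)
      moreover have "0 < 1 + x\<^sup>2" by (smt (verit) zero_le_power2)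
      ultimately show ?thesis using \<open>sqrt s \<le> x\<^sup>2\<close> by simp
    qed
    then have "W \<le> (1 + ln (1 + x\<^sup>2)) powr (2 * \<delta>)"
      unfolding W_def using d s1 by (intro powr_mono2) auto
    then have "(hermite_fun n x)\<^sup>2 / (1 + ln (1 + x\<^sup>2)) powr (2 * \<delta>) \<le> (hermite_fun n x)\<^sup>2 / W"
      using W1 by (intro divide_left_mono) (auto intro!: mult_pos_pos)
    moreover have "0 \<le> c * indicator {-R..R} x" unfolding c_def using n1 by simp
    ultimately show ?thesis by simp
  qed
  have iI: "integrable lborel (\<lambda>x. indicator {-R..R} x :: real)"
    by (rule integrable_real_indicator) (use R0 in \<open>auto simp: emeasure_lborel_Icc\<close>)
  have "(LINT x|lborel. (hermite_fun n x)\<^sup>2 / (1 + ln (1 + x\<^sup>2)) powr (2 * \<delta>))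
     \<le> (LINT x|lborel. c * indicator {-R..R} x + (1 / W) * (hermite_fun n x)\<^sup>2)"
    using int_w[of "2 * \<delta>" n] d iI hf_int(2)[of n] pt by (intro integral_mono) auto
  also have "\<dots> = c * (2 * R) + 1 / W"
    using iI hf_int[of n] R0 by simp
  finally have I: "(LINT x|lborel. (hermite_fun n x)\<^sup>2 / (1 + ln (1 + x\<^sup>2)) powr (2 * \<delta>)) \<le> c * (2 * R) + 1 / W" .
  have Rn: "sqrt (sqrt (real n)) / 2 \<le> R"
  proof -
    have "sqrt (sqrt (real n / 16)) \<le> R" unfolding R_def s_def using n1 by (intro real_sqrt_le_mono) auto
    moreover have "sqrt (sqrt (real n / 16)) = sqrt (sqrt (real n)) / 2"
      by (simp add: real_sqrt_divide)
    ultimately show ?thesis by simp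
  qed
  have "c * (2 * R) = 8 / (sqrt 2 * R)"
  proof -
    have "2 * real n - 1 = 2 * s" unfolding s_def by simp
    then have "sqrt (2 * real n - 1) = sqrt 2 * (R * R)" using RR by (simp add: real_sqrt_mult)
    then show ?thesis unfolding c_def using R0 by (simp add: field_simps)
  qed
  also have "\<dots> \<le> 8 / R" using R0 by (simp add: field_simps)
  also have "\<dots> \<le> 16 / sqrt (sqrt (real n))"
    using Rn R0 n1 by (simp add: field_simps)
  also have "\<dots> \<le> 16 * K / L powr (2 * \<delta>)"
  proof -
    have lp: "L powr (2 * \<delta>) \<le> K * sqrt (sqrt (real n))" unfolding L_def K_def using d n by (intro log_poly) auto
    have "L powr (2 * \<delta>) > 0" using L1 by simp
    moreover have "sqrt (sqrt (real n)) > 0" using n1 by simp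
    ultimately show ?thesis using lp by (simp add: field_simps)
  qed
  finally have T1: "c * (2 * R) \<le> 16 * K / L powr (2 * \<delta>)" .
  have "L / 2 \<le> 1 + ln (1 + sqrt s)"
  proof -
    have sq0: "0 < sqrt s" using s1 by simp
    have p1: "0 < 1 + sqrt s" using sq0 by linarith
    have "ln (sqrt s) \<le> ln (1 + sqrt s)" by (simp only: ln_le_cancel_iff[OF sq0 p1])
    moreover have "2 * ln (sqrt s) = ln s" using s1 by (simp add: ln_sqrt)
    moreover have "ln (real n / 2) \<le> ln s" unfolding s_def using n1 by simp
    moreover have "ln (real n / 2) = ln (real n) - ln 2" using n1 by (simp add: ln_div)
    moreover have "ln (2::real) < 1" by (rule ln_2_less_1)
    ultimately have "1 + ln (real n) \<le> 2 * (1 + ln (1 + sqrt s))" by argo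
    then show ?thesis unfolding L_def by simp
  qed
  then have "(L / 2) powr (2 * \<delta>) \<le> W" unfolding W_def using L1 d by (intro powr_mono2) auto
  moreover have "(L / 2) powr (2 * \<delta>) = L powr (2 * \<delta>) / 2 powr (2 * \<delta>)" using L1 by (simp add: powr_divide)
  ultimately have "L powr (2 * \<delta>) / 2 powr (2 * \<delta>) \<le> W" by simp
  then have T2: "1 / W \<le> 2 powr (2 * \<delta>) / L powr (2 * \<delta>)"
    using L1 W1 by (simp add: field_simps)
  have "c * (2 * R) + 1 / W \<le> 16 * K / L powr (2 * \<delta>) + 2 powr (2 * \<delta>) / L powr (2 * \<delta>)"
    using T1 T2 by simp
  also have "\<dots> = (16 * K + 2 powr (2 * \<delta>)) / L powr (2 * \<delta>)" by (simp add: add_divide_distrib)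
  finally show ?thesis using I unfolding K_def L_def by simp
qed

theorem lemma1p4:
  fixes \<delta>\<^sub>1 :: real
  assumes "\<delta>\<^sub>1 > 0"
  shows "\<exists>C. \<forall>n::nat. n \<ge> 1 \<longrightarrow>
           sqrt (LINT x|lborel. (hermite_fun n x)\<^sup>2 / (1 + ln (1 + x\<^sup>2)) powr (2 * \<delta>\<^sub>1))
             \<le> C / (1 + ln (real n)) powr \<delta>\<^sub>1"
proof -
  define A where "A = 16 * (1 + 8 * \<delta>\<^sub>1) powr (2 * \<delta>\<^sub>1) + 2 powr (2 * \<delta>\<^sub>1)"
  have A1: "A \<ge> 1"
  proof -
    have "1 \<le> (2::real) powr (2 * \<delta>\<^sub>1)" using assms by (intro ge_one_powr_ge_zero) auto
    moreover have "0 \<le> (1 + 8 * \<delta>\<^sub>1) powr (2 * \<delta>\<^sub>1)" by simp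
    ultimately show ?thesis unfolding A_def by linarith
  qed
  show ?thesis
  proof (rule exI[of _ "sqrt A"], intro allI impI)
    fix n :: nat assume n1: "n \<ge> 1"
    define I where "I = (LINT x|lborel. (hermite_fun n x)\<^sup>2 / (1 + ln (1 + x\<^sup>2)) powr (2 * \<delta>\<^sub>1))"
    define L where "L = 1 + ln (real n)"
    have L1: "L \<ge> 1" unfolding L_def using n1 by simp
    show "sqrt I \<le> sqrt A / L powr \<delta>\<^sub>1"
    proof (cases "n = 1")
      case True
      have "I \<le> (LINT x|lborel. (hermite_fun n x)\<^sup>2)"
        unfolding I_def
      proof (rule integral_mono)
        show "integrable lborel (\<lambda>x. (hermite_fun n x)\<^sup>2 / (1 + ln (1 + x\<^sup>2)) powr (2 * \<delta>\<^sub>1))"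
          using assms by (intro int_w) auto
        show "integrable lborel (\<lambda>x. (hermite_fun n x)\<^sup>2)" by (rule hf_int(2))
        fix x
        have "1 \<le> (1 + ln (1 + x\<^sup>2)) powr (2 * \<delta>\<^sub>1)" using assms by (intro w_ge1) auto
        then show "(hermite_fun n x)\<^sup>2 / (1 + ln (1 + x\<^sup>2)) powr (2 * \<delta>\<^sub>1) \<le> (hermite_fun n x)\<^sup>2"
        proof -
          assume w: "1 \<le> (1 + ln (1 + x\<^sup>2)) powr (2 * \<delta>\<^sub>1)"
          have "(hermite_fun n x)\<^sup>2 / (1 + ln (1 + x\<^sup>2)) powr (2 * \<delta>\<^sub>1) \<le> (hermite_fun n x)\<^sup>2 / 1"
            using w by (intro divide_left_mono) auto
          then show ?thesis by simp
        qed
      qed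
      then have "I \<le> A" using hf_int(1)[of n] A1 by simp
      then have "sqrt I \<le> sqrt A" by simp
      then show ?thesis using True unfolding L_def by simp
    next
      case False
      then have n2: "n \<ge> 2" using n1 by simp
      have "I \<le> A / L powr (2 * \<delta>\<^sub>1)" unfolding I_def A_def L_def by (rule main_ge2[OF assms n2])
      also have "L powr (2 * \<delta>\<^sub>1) = (L powr \<delta>\<^sub>1)\<^sup>2"
        using L1 by (simp add: power2_eq_square powr_add[symmetric])
      finally have "sqrt I \<le> sqrt (A / (L powr \<delta>\<^sub>1)\<^sup>2)" by (rule real_sqrt_le_mono)
      also have "\<dots> = sqrt A / L powr \<delta>\<^sub>1" using L1 by (simp add: real_sqrt_divide)
      finally show ?thesis .
    qed
  qed
qed

end
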